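(* For every positive integer $n$, \[ \sum_{k=1}^{n}(8k-1)\frac{(1)_k(-\tfrac{1}{4})_k(-\tfrac{3}{4})_k}{(\tfrac{1}{2})_k^2(\tfrac{3}{2})_k}\frac{(\tfrac{1}{2}+n)_k(-n)_k}{(\tfrac{1}{2}+3n)_k(-1-3n)_k}\sum_{i=1}^{k}\left\{\frac{1}{(2i-1)^2}-\frac{9}{4i^2}\right\} =\frac{n!^2(\tfrac{1}{6})_n(\tfrac{5}{6})_n}{(\tfrac{1}{2})_n^2(\tfrac{2}{3})_n(\tfrac{4}{3})_n}\sum_{j=1}^{2n}\frac{(-1)^{j}}{j^2}. \]
   Context: For a complex number $x$ and a nonnegative integer $n$, $(x)_n=x(x+1)\cdots(x+n-1)$ denotes the shifted factorial (Pochhammer symbol), with $(x)_0=1$. *)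

theory Defs
  imports Complex_Main
begin

end

theory Submission imports Defs begin

definition sig :: "real \<Rightarrow> real \<Rightarrow> real" where "sig n k = ((8*k+7)*(k+1)*(4*k-1)*(4*k-3)*(2*n+2*k+3)*(k-n-1)) / (2*(8*k-1)*(2*k+1)^2*(2*k+3)*(6*n+2*k+7)*(k-3*n-4))"
definition Rt :: "real \<Rightarrow> real \<Rightarrow> real" where "Rt n k = (-2*(4*n+3)*k*(2*k-1)^2*(2*k+1)*(2*k+6*n+5)) / ((8*k-1)*(2*n+1)^2*(2*n+2*k+1)*(k-3*n-4)*(k-3*n-3))"
definition Bt :: "real \<Rightarrow> real \<Rightarrow> real" where "Bt n k = ((4*n+3)*(2*k-1)^2*(2*k+1)*(2*k+6*n+3)*(2*k+6*n+5)*(2*k-6*n-3)) / (2*(2*n+1)^4*(8*k-1)*k*(2*k+2*n+1)*(k-3*n-4)*(k-3*n-3))"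
definition gr :: "real \<Rightarrow> real \<Rightarrow> real" where "gr n k = ((n+1)^2*(n+1-k)*(2*k+6*n+1)*(2*k+6*n+3)*(2*k+6*n+5)) / ((2*n+1)^2*(2*n+2*k+1)*(k-3*n-4)*(k-3*n-3)*(3*n+2-k))"
definition hh :: "real \<Rightarrow> real" where "hh k = ((3-4*k)*(8*k-3)) / (4*k^2*(2*k-1)^2)"
definition al :: "real \<Rightarrow> real" where "al n = (4*n+3) / ((2*n+1)^2*(2*n+2)^2)"
definition gam :: "real \<Rightarrow> real" where "gam n = (n+1)^2*(6*n+1)*(6*n+5)/((2*n+1)^2*(3*n+2)*(3*n+4))"

lemma frac_cancel: fixes a b c x y :: real
  assumes "c \<noteq> 0" "a = x*c" "b = y*c" shows "a/b = x/y"
  using assms by simp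

lemma comb3: fixes xa xb xc ya yb yc ma mb mc D :: real
  assumes "ma\<noteq>0" "mb\<noteq>0" "mc\<noteq>0" "D\<noteq>0" "ya*ma = D" "yb*mb = D" "yc*mc = D"
   "xa*ma - xb*mb = D - xc*mc"
  shows "xa/ya - xb/yb = 1 - xc/yc"
proof -
  have e1: "xa/ya = (xa*ma)/D" using assms(1,5) by (metis mult_divide_mult_cancel_right)
  have e2: "xb/yb = (xb*mb)/D" using assms(2,6) by (metis mult_divide_mult_cancel_right)
  have e3: "xc/yc = (xc*mc)/D" using assms(3,7) by (metis mult_divide_mult_cancel_right)
  have "xa*ma/D - xb*mb/D = (D - xc*mc)/D" unfolding assms(8)[symmetric] by (rule diff_divide_distrib[symmetric])
  also have "\<dots> = 1 - xc*mc/D" using assms(4) by (simp add: diff_divide_distrib)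
  finally show ?thesis unfolding e1 e2 e3 .
qed

lemma comb4: fixes xb xc xd xe yb yc yd ye mb mc md me D :: real
  assumes "mb\<noteq>0" "mc\<noteq>0" "md\<noteq>0" "me\<noteq>0" "D\<noteq>0" "yb*mb = D" "yc*mc = D" "yd*md = D" "ye*me = D"
   "- (xb*mb) + xc*mc + xe*me = - (xd*md)"
  shows "- (xb/yb) + xc/yc + xe/ye = - (xd/yd)"
proof -
  have e2: "xb/yb = (xb*mb)/D" using assms(1,6) by (metis mult_divide_mult_cancel_right)
  have e3: "xc/yc = (xc*mc)/D" using assms(2,7) by (metis mult_divide_mult_cancel_right)
  have e4: "xd/yd = (xd*md)/D" using assms(3,8) by (metis mult_divide_mult_cancel_right)
  have e5: "xe/ye = (xe*me)/D" using assms(4,9) by (metis mult_divide_mult_cancel_right)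
  have "- (xb*mb/D) + xc*mc/D + xe*me/D = (- (xb*mb) + xc*mc + xe*me)/D" by (simp only: add_divide_distrib minus_divide_left)
  also have "\<dots> = (- (xd*md))/D" by (simp only: assms(10))
  also have "\<dots> = - (xd*md/D)" by simp
  finally show ?thesis unfolding e2 e3 e4 e5 .
qed

lemma Rt_succ: "Rt n (k+1) = (-2*(4*n+3)*(k+1)*(2*k+1)^2*(2*k+3)*(2*k+6*n+7)) / ((8*k+7)*(2*n+1)^2*(2*n+2*k+3)*(k-3*n-3)*(k-3*n-2))"
  unfolding Rt_def by (rule arg_cong2[where f="(/)"]; algebra)

lemma Bt_succ: "Bt n (k+1) = ((4*n+3)*(2*k+1)^2*(2*k+3)*(2*k+6*n+5)*(2*k+6*n+7)*(2*k-6*n-1)) / (2*(2*n+1)^4*(8*k+7)*(k+1)*(2*k+2*n+3)*(k-3*n-3)*(k-3*n-2))"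
  unfolding Bt_def by (rule arg_cong2[where f="(/)"]; algebra)

lemma I1:
  fixes n k :: real
  assumes "n \<ge> 0" "k \<ge> 0" "k \<le> n + 1" "8*k \<noteq> 1"
  shows "sig n k * Rt n (k+1) - Rt n k = 1 - gr n k"
proof -
  have nz: "8*k-1 \<noteq> 0" "2*n+1 \<noteq> 0" "2*n+2*k+1 \<noteq> 0" "2*n+2*k+3 \<noteq> 0" "k-3*n-4 \<noteq> 0" "k-3*n-3 \<noteq> 0" "k-3*n-2 \<noteq> 0"
     "8*k+7 \<noteq> 0" "2*k+1 \<noteq> 0" "2*k+3 \<noteq> 0" "2*k+6*n+7 \<noteq> 0"
    using assms by auto
  have a: "sig n k * Rt n (k+1) = (-(4*n+3)*(k+1)^2*(4*k-1)*(4*k-3)*(k-n-1)) / ((8*k-1)*(2*n+1)^2*(k-3*n-4)*(k-3*n-3)*(k-3*n-2))"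
    unfolding sig_def Rt_succ times_divide_times_eq
    apply (rule frac_cancel[where c="(2*(8*k+7)*(2*n+2*k+3)*(2*k+1)^2*(2*k+3)*(2*k+6*n+7))"])
    using nz apply simp
    apply algebra+
    done
  show ?thesis unfolding a unfolding Rt_def gr_def
    apply (rule comb3[where ma="2*n+2*k+1" and mb="k-3*n-2" and mc="-(8*k-1)" and D="((8*k-1)*(2*n+1)^2*(2*n+2*k+1)*(k-3*n-4)*(k-3*n-3)*(k-3*n-2))"])
    using nz apply simp_all[4]
    apply algebra+
    done
qed

lemma I2:
  fixes n k :: real
  assumes "n \<ge> 0" "k \<ge> 1" "k \<le> n + 1"
  shows "- (sig n k * Bt n (k+1)) + Rt n k * hh k + Bt n k = - (al n * gr n k)"
proof -
  have nz: "8*k-1 \<noteq> 0" "2*n+1 \<noteq> 0" "2*n+2*k+1 \<noteq> 0" "2*n+2*k+3 \<noteq> 0" "k-3*n-4 \<noteq> 0" "k-3*n-3 \<noteq> 0" "k-3*n-2 \<noteq> 0"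
     "8*k+7 \<noteq> 0" "2*k+1 \<noteq> 0" "2*k+3 \<noteq> 0" "2*k+6*n+7 \<noteq> 0" "k \<noteq> 0" "2*k-1 \<noteq> 0" "k+1 \<noteq> 0" "n+1 \<noteq> 0"
    using assms by auto
  have a: "sig n k * Bt n (k+1) = ((4*n+3)*(4*k-1)*(4*k-3)*(k-n-1)*(2*k+6*n+5)*(2*k-6*n-1)) / (4*(8*k-1)*(2*n+1)^4*(k-3*n-4)*(k-3*n-3)*(k-3*n-2))"
    unfolding sig_def Bt_succ times_divide_times_eq
    apply (rule frac_cancel[where c="((8*k+7)*(k+1)*(2*n+2*k+3)*(2*k+1)^2*(2*k+3)*(2*k+6*n+7))"])
    using nz apply simp
    apply algebra+
    done
  have b: "Rt n k * hh k = (-(4*n+3)*(2*k+1)*(2*k+6*n+5)*(3-4*k)*(8*k-3)) / (2*k*(8*k-1)*(2*n+1)^2*(2*n+2*k+1)*(k-3*n-4)*(k-3*n-3))"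
    unfolding Rt_def hh_def times_divide_times_eq
    apply (rule frac_cancel[where c="(2*k*(2*k-1)^2)"])
    using nz apply simp
    apply algebra+
    done
  have c: "al n * gr n k = ((4*n+3)*(n+1-k)*(2*k+6*n+1)*(2*k+6*n+3)*(2*k+6*n+5)) / (4*(2*n+1)^4*(2*n+2*k+1)*(k-3*n-4)*(k-3*n-3)*(3*n+2-k))"
    unfolding al_def gr_def times_divide_times_eq
    apply (rule frac_cancel[where c="((n+1)^2)"])
    using nz apply simp
    apply algebra+
    done
  show ?thesis unfolding a b c unfolding Bt_def
    apply (rule comb4[where mb="(k*(2*n+2*k+1))" and mc="(2*(2*n+1)^2*(k-3*n-2))" and md="(-(k*(8*k-1)))" and me="(2*(k-3*n-2))" and D="(4*k*(8*k-1)*(2*n+1)^4*(2*n+2*k+1)*(k-3*n-4)*(k-3*n-3)*(k-3*n-2))"])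
    using nz apply simp_all[5]
    apply algebra+
    done
qed
lemma I3:
  fixes n :: real assumes "n \<ge> 0"
  shows "- (sig n 0 * Bt n 1) + al n * gam n = 0"
proof -
  have nz: "2*n+3 \<noteq> 0" "6*n+7 \<noteq> 0" "3*n+4 \<noteq> 0" "2*n+1 \<noteq> 0" "n+1 \<noteq> 0" "3*n+2 \<noteq> 0"
    using assms by auto
  have s0: "sig n 0 = (-(7*(2*n+3)*(n+1))) / (2*(6*n+7)*(3*n+4))"
    unfolding sig_def
    apply (rule frac_cancel[where c=3])
      apply simp
     apply (simp_all add: algebra_simps power2_eq_square power3_eq_cube power4_eq_xxxx)
    done
  have b1: "Bt n 1 = (-((4*n+3)*(6*n+5)*(6*n+7)*(6*n+1))) / (14*(2*n+1)^4*(2*n+3)*(n+1)*(3*n+2))"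
    unfolding Bt_def
    apply (rule frac_cancel[where c=3])
      apply simp
     apply (simp_all add: algebra_simps power2_eq_square power3_eq_cube power4_eq_xxxx)
    done
  have p1: "sig n 0 * Bt n 1 = ((4*n+3)*(6*n+5)*(6*n+1)) / (4*(3*n+4)*(2*n+1)^4*(3*n+2))"
    unfolding s0 b1 times_divide_times_eq
    apply (rule frac_cancel[where c="7*(2*n+3)*(n+1)*(6*n+7)"])
    using nz apply simp
     apply algebra+
    done
  have p2: "al n * gam n = ((4*n+3)*(6*n+5)*(6*n+1)) / (4*(3*n+4)*(2*n+1)^4*(3*n+2))"
    unfolding al_def gam_def times_divide_times_eq
    apply (rule frac_cancel[where c="(n+1)^2"])
    using nz apply simp
     apply algebra+
    done
  show ?thesis unfolding p1 p2 by simp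
qed

definition tt :: "nat \<Rightarrow> nat \<Rightarrow> real" where
"tt m k = (8 * real k - 1) * (pochhammer 1 k * pochhammer (-1/4) k * pochhammer (-3/4) k / ((pochhammer (1/2) k)^2 * pochhammer (3/2) k)) * (pochhammer (1/2 + real m) k * pochhammer (- real m) k / (pochhammer (1/2 + 3 * real m) k * pochhammer (-1 - 3 * real m) k))"

definition cc :: "nat \<Rightarrow> real" where
"cc m = (real (fact m))^2 * pochhammer (1/6) m * pochhammer (5/6) m / ((pochhammer (1/2) m)^2 * pochhammer (2/3) m * pochhammer (4/3) m)"

definition HH :: "nat \<Rightarrow> real" where
"HH k = (\<Sum>i=1..k. 1 / (2 * real i - 1)^2 - 9 / (4 * (real i)^2))"

definition G2 :: "nat \<Rightarrow> real" where
"G2 n = (\<Sum>j=1..2*n. (-1)^j / (real j)^2)"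

lemma L1gen: fixes A B C D E Fp G P Q l0 l1 l2 l3 l4 l5 l6 l7 l8 l9 l10 :: real
 assumes "D \<noteq> 0" "E \<noteq> 0" "P \<noteq> 0" "Q \<noteq> 0" "l5 \<noteq> 0" "l6 \<noteq> 0" "l9 \<noteq> 0" "l10 \<noteq> 0" "l0 \<noteq> 0"
 shows "l1 * (A*l2 * (B*l3) * (C*l4) / ((D*l5)^2 * (E*l6))) * (Fp*l7 * (G*l8) / (P*l9 * (Q*l10)))
   = l0 * (A*B*C/(D^2*E)) * (Fp*G/(P*Q)) * (l1*l2*l3*l4*l7*l8 / (l0*l5^2*l6*l9*l10))"
  using assms by (simp add: field_simps power2_eq_square)

lemma sig_alt: fixes x y :: real assumes "0 \<le> x" "0 \<le> y" "x \<le> y+1" "8*x \<noteq> 1"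
  shows "((8*(1+x)-1)*(1+x)*(-1/4+x)*(-3/4+x)*(1/2+(1+y)+x)*(-(1+y)+x) / ((8*x-1)*(1/2+x)^2*(3/2+x)*(1/2+3*(1+y)+x)*(-1-3*(1+y)+x))) = sig y x"
  unfolding sig_def
  apply (rule frac_cancel[where c="1/32"])
  apply simp
  apply algebra+
  done

lemma pd_nz: assumes "k \<le> 3*m+1" shows "pochhammer (-1 - 3*real m) k \<noteq> (0::real)"
proof
  assume "pochhammer (-1 - 3*real m) k = 0"
  then obtain j where j: "j<k" "-1-3*real m = - real j" by (auto simp: pochhammer_eq_0_iff)
  then have "real j = 3*real m+1" by linarith
  moreover have "real j < real k" using j by simp
  moreover have "real k \<le> 3*real m + 1" using assms by (metis of_nat_le_iff of_nat_Suc of_nat_mult of_nat_numeral add.commute Suc_eq_plus1)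
  ultimately show False by linarith
qed

lemma eightk: "8 * real k \<noteq> (1::real)"
proof (cases k)
  case 0 then show ?thesis by simp
next
  case (Suc j) then have "real k \<ge> 1" by simp
  then show ?thesis by linarith
qed

lemma L1: assumes "k \<le> Suc n"
  shows "tt (Suc n) (Suc k) = tt (Suc n) k * sig (real n) (real k)"
proof -
  have h: "tt (Suc n) (Suc k) = tt (Suc n) k * ((8*(1+real k)-1)*(1+real k)*(-1/4+real k)*(-3/4+real k)*(1/2+(1+real n)+real k)*(-(1+real n)+real k) / ((8*real k-1)*(1/2+real k)^2*(3/2+real k)*(1/2+3*(1+real n)+real k)*(-1-3*(1+real n)+real k)))"
    unfolding tt_def pochhammer_Suc of_nat_Suc
    apply (rule L1gen)
    using assms eightk[of k] pd_nz[of k "Suc n"]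
    apply (simp_all add: pochhammer_pos[THEN less_imp_neq[symmetric]] pochhammer_pos)
    done
  show ?thesis unfolding h using sig_alt[of "real k" "real n"] assms eightk[of k] by simp
qed
lemma poch_shift': fixes a b :: real assumes "b = a + 1"
  shows "pochhammer a k * (a + real k) = a * pochhammer b k"
  using assms pochhammer_Suc[of a k] pochhammer_rec[of a k] by simp

lemma chain3: fixes a b d e l1 l2 l3 c1 c2 c3 :: real
  assumes "a*l1 = c1*b" "b*l2 = c2*d" "d*l3 = c3*e"
  shows "a*(l1*l2*l3) = (c1*c2*c3)*e"
proof -
  have "a*(l1*l2*l3) = (a*l1)*l2*l3" by (simp add: mult_ac)
  also have "\<dots> = c1*(b*l2)*l3" unfolding assms(1) by (simp add: mult_ac)
  also have "\<dots> = c1*c2*(d*l3)" unfolding assms(2) by (simp add: mult_ac)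
  also have "\<dots> = (c1*c2*c3)*e" unfolding assms(3) by (simp add: mult_ac)
  finally show ?thesis .
qed

lemma L2gen: fixes M Pa Pb Pc Pd Qa Qb Qc Qd c1 u1 c2 u2 c3 u3 c4 u4 g r :: real
 assumes "Pa*u1 = c1*Qa" "Qb*u2 = c2*Pb" "Pc*u3 = c3*Qc" "Qd*u4 = c4*Pd"
   "u1\<noteq>0" "c2\<noteq>0" "c3\<noteq>0" "u3\<noteq>0" "u4\<noteq>0" "c4\<noteq>0" "Qc\<noteq>0" "Qd\<noteq>0"
   "(c1*u2*u3*c4)/(u1*c2*c3*u4) * g = r"
 shows "M*(Pa*Pb/(Pc*Pd))*g = M*(Qa*Qb/(Qc*Qd))*r"
proof -
  have e1: "Pa = c1*Qa/u1" using assms(1,5) by (simp add: eq_divide_eq)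
  have e2: "Pb = Qb*u2/c2" using assms(2,6) by (simp add: eq_divide_eq)
  have e3: "Pc = c3*Qc/u3" using assms(3,8) by (simp add: eq_divide_eq)
  have e4: "Pd = Qd*u4/c4" using assms(4,10) by (simp add: eq_divide_eq)
  show ?thesis unfolding e1 e2 e3 e4 assms(13)[symmetric]
    using assms(5-12) by (simp add: field_simps)
qed

lemma gr_alt: fixes x y :: real assumes "0 \<le> x" "0 \<le> y" "x \<le> y + 1"
  shows "((1/2+y)*(-(1+y)+x)*((1/2+3*y+x)*(3/2+3*y+x)*(5/2+3*y+x))*((-1-3*(1+y))*(-3-3*y)*(-2-3*y)))
        / ((1/2+y+x)*(-(1+y))*((1/2+3*y)*(3/2+3*y)*(5/2+3*y))*((-1-3*(1+y)+x)*(-3-3*y+x)*(-2-3*y+x))) * gam y = gr y x"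
  unfolding gam_def gr_def times_divide_times_eq
  apply (rule frac_cancel[where c="3*(2*y+1)*(y+1)*(3*y+2)*(3*y+4)*(6*y+1)*(6*y+5)/16"])
  using assms apply simp
  apply algebra+
  done

lemma L2: assumes k: "k \<le> Suc n"
  shows "tt n k * gam (real n) = tt (Suc n) k * gr (real n) (real k)"
proof -
  have xy: "0 \<le> real k" "0 \<le> real n" "real k \<le> real n + 1" using k by auto
  have R1: "pochhammer (1/2+real n) k * (1/2+real n+real k) = (1/2+real n) * pochhammer (1/2+(1+real n)) k"
    by (rule poch_shift') simp
  have R2: "pochhammer (-(1+real n)) k * (-(1+real n)+real k) = (-(1+real n)) * pochhammer (- real n) k"
    by (rule poch_shift') simp
  have R3a: "pochhammer (1/2+3*real n) k * (1/2+3*real n+real k) = (1/2+3*real n) * pochhammer (3/2+3*real n) k"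
    by (rule poch_shift') simp
  have R3b: "pochhammer (3/2+3*real n) k * (3/2+3*real n+real k) = (3/2+3*real n) * pochhammer (5/2+3*real n) k"
    by (rule poch_shift') simp
  have R3c: "pochhammer (5/2+3*real n) k * (5/2+3*real n+real k) = (5/2+3*real n) * pochhammer (1/2+3*(1+real n)) k"
    by (rule poch_shift') simp
  have R4a: "pochhammer (-1-3*(1+real n)) k * (-1-3*(1+real n)+real k) = (-1-3*(1+real n)) * pochhammer (-3-3*real n) k"
    by (rule poch_shift') simp
  have R4b: "pochhammer (-3-3*real n) k * (-3-3*real n+real k) = (-3-3*real n) * pochhammer (-2-3*real n) k"
    by (rule poch_shift') simp
  have R4c: "pochhammer (-2-3*real n) k * (-2-3*real n+real k) = (-2-3*real n) * pochhammer (-1-3*real n) k"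
    by (rule poch_shift') simp
  have R3: "pochhammer (1/2+3*real n) k * ((1/2+3*real n+real k)*(3/2+3*real n+real k)*(5/2+3*real n+real k)) = ((1/2+3*real n)*(3/2+3*real n)*(5/2+3*real n)) * pochhammer (1/2+3*(1+real n)) k"
    by (rule chain3[OF R3a R3b R3c])
  have R4: "pochhammer (-1-3*(1+real n)) k * ((-1-3*(1+real n)+real k)*(-3-3*real n+real k)*(-2-3*real n+real k)) = ((-1-3*(1+real n))*(-3-3*real n)*(-2-3*real n)) * pochhammer (-1-3*real n) k"
    by (rule chain3[OF R4a R4b R4c])
  have qd: "pochhammer (-1-3*(1+real n)) k \<noteq> 0"
    using pd_nz[of k "Suc n"] k by simp
  have qc: "pochhammer (1/2+3*(1+real n)) k \<noteq> (0::real)"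
    by (rule pochhammer_pos[THEN less_imp_neq[symmetric]]) simp
  show ?thesis
    unfolding tt_def of_nat_Suc
    apply (rule L2gen[OF R1 R2 R3 R4])
    using xy qc qd apply simp_all
    using gr_alt[OF xy] by simp
qed


lemma gam_alt: fixes y :: real assumes "0 \<le> y"
  shows "gam y = ((1+y)^2*(1/6+y)*(5/6+y))/((1/2+y)^2*(2/3+y)*(4/3+y))"
  unfolding gam_def
  apply (rule frac_cancel[where c=36])
  apply simp
  apply algebra+
  done

lemma L3gen: fixes F P1 P2 P3 P4 P5 l0 l1 l2 l3 l4 l5 :: real
  assumes "P3\<noteq>0" "P4\<noteq>0" "P5\<noteq>0" "l3\<noteq>0" "l4\<noteq>0" "l5\<noteq>0"
  shows "(l0*F)^2 * (P1*l1) * (P2*l2) / ((P3*l3)^2 * (P4*l4) * (P5*l5)) = F^2*P1*P2/(P3^2*P4*P5) * ((l0^2*l1*l2)/(l3^2*l4*l5))"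
  using assms by (simp add: field_simps power2_eq_square)

lemma L3: "cc (Suc n) = cc n * gam (real n)"
proof -
  have hf: "real (fact (Suc n)) = (1 + real n) * real (fact n)" by (simp add: algebra_simps)
  have "cc (Suc n) = cc n * (((1+real n)^2*(1/6+real n)*(5/6+real n))/((1/2+real n)^2*(2/3+real n)*(4/3+real n)))"
    unfolding cc_def hf pochhammer_Suc of_nat_Suc
    by (rule L3gen) (simp_all add: pochhammer_pos[THEN less_imp_neq[symmetric]] add_pos_nonneg)
  then show ?thesis using gam_alt[of "real n"] by simp
qed
lemma tt0: "tt m 0 = -1" by (simp add: tt_def)
lemma ttz: "tt m (Suc m) = 0" by (simp add: tt_def pochhammer_of_nat_eq_0_iff)
lemma cc0: "cc 0 = 1" by (simp add: cc_def)
lemma Rt0: "Rt n 0 = 0" by (simp add: Rt_def)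

lemma realSuc: "real (Suc k) = real k + 1" by simp

lemma kle: "k \<le> Suc n \<Longrightarrow> real k \<le> real n + 1"
  by (metis of_nat_Suc of_nat_le_iff add.commute)

lemma WZ: "(\<Sum>k=1..m. tt m k) = 1 - cc m"
proof (induction m)
  case 0 then show ?case by (simp add: cc0)
next
  case (Suc n)
  define f where "f j = Rt (real n) (real j) * tt (Suc n) j" for j
  have step: "tt (Suc n) k - gam (real n) * tt n k = f (Suc k) - f k" if k: "k \<le> Suc n" for k
  proof -
    have a: "tt (Suc n) (Suc k) = tt (Suc n) k * sig (real n) (real k)" by (rule L1[OF k])
    have b: "tt n k * gam (real n) = tt (Suc n) k * gr (real n) (real k)" by (rule L2[OF k])
    have c: "sig (real n) (real k) * Rt (real n) (real k + 1) - Rt (real n) (real k) = 1 - gr (real n) (real k)"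
      by (rule I1) (use kle[OF k] eightk[of k] in auto)
    have "f (Suc k) - f k = tt (Suc n) k * (sig (real n) (real k) * Rt (real n) (real k + 1) - Rt (real n) (real k))"
      unfolding f_def realSuc a by (simp add: algebra_simps)
    also have "\<dots> = tt (Suc n) k * (1 - gr (real n) (real k))" by (simp only: c)
    also have "\<dots> = tt (Suc n) k - gam (real n) * tt n k" using b by (simp add: algebra_simps)
    finally show ?thesis by simp
  qed
  have "(\<Sum>k=0..Suc n. tt (Suc n) k - gam (real n) * tt n k) = (\<Sum>k=0..Suc n. f (Suc k) - f k)"
    by (rule sum.cong) (auto simp: step)
  also have "\<dots> = f (Suc (Suc n)) - f 0" by (rule sum_Suc_diff) simp
  also have "\<dots> = 0" by (simp add: f_def ttz Rt0)
  finally have s0: "(\<Sum>k=0..Suc n. tt (Suc n) k - gam (real n) * tt n k) = 0" .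
  have "(\<Sum>k=0..Suc n. tt (Suc n) k) - gam (real n) * (\<Sum>k=0..Suc n. tt n k) = 0"
    using s0 by (simp only: sum_subtractf sum_distrib_left)
  then have s: "(\<Sum>k=0..Suc n. tt (Suc n) k) = gam (real n) * (\<Sum>k=0..Suc n. tt n k)"
    by simp
  have s1: "(\<Sum>k=0..Suc n. tt (Suc n) k) = -1 + (\<Sum>k=1..Suc n. tt (Suc n) k)"
    by (simp add: sum.atLeast_Suc_atMost tt0)
  have s2: "(\<Sum>k=0..Suc n. tt n k) = -1 + (1 - cc n)"
    using Suc.IH by (simp add: sum.atLeast_Suc_atMost tt0 ttz)
  have "(\<Sum>k=1..Suc n. tt (Suc n) k) = 1 + gam (real n) * (\<Sum>k=0..Suc n. tt n k)" using s s1 by linarith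
  also have "\<dots> = 1 - cc n * gam (real n)" unfolding s2 by (simp add: algebra_simps)
  also have "\<dots> = 1 - cc (Suc n)" by (simp add: L3)
  finally show ?case .
qed

lemma HH_step: "HH (Suc j) = HH j + hh (real (Suc j))"
proof -
  have "HH (Suc j) = HH j + (1 / (2 * real (Suc j) - 1)^2 - 9 / (4 * (real (Suc j))^2))"
    by (simp add: HH_def)
  moreover have "1 / (2 * real (Suc j) - 1)^2 - 9 / (4 * (real (Suc j))^2) = hh (real (Suc j))"
  proof -
    define x where "x = real (Suc j)"
    have x: "x \<ge> 1" unfolding x_def by simp
    have "1 / (2 * x - 1)^2 - 9 / (4 * x^2) = hh x"
      unfolding hh_def using x by (simp add: field_simps) algebra
    then show ?thesis unfolding x_def .
  qed
  ultimately show ?thesis by simp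
qed

lemma HH0: "HH 0 = 0" by (simp add: HH_def)

lemma G2_step: "G2 (Suc n) = G2 n - al (real n)"
proof -
  have e: "2 * Suc n = Suc (Suc (2*n))" by simp
  have "G2 (Suc n) = G2 n + (-1)^(Suc (2*n)) / (real (Suc (2*n)))^2 + (-1)^(Suc (Suc (2*n))) / (real (Suc (Suc (2*n))))^2"
    unfolding G2_def e by simp
  also have "\<dots> = G2 n - (1/(2*real n+1)^2 - 1/(2*real n+2)^2)" by (simp add: algebra_simps)
  also have "(1/(2*real n+1)^2 - 1/(2*real n+2)^2) = al (real n)"
    unfolding al_def by (simp add: field_simps) algebra
  finally show ?thesis .
qed

lemma MAINR: "(\<Sum>k=1..m. tt m k * HH k) = cc m * G2 m"
proof (induction m)
  case 0 then show ?case by (simp add: G2_def)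
next
  case (Suc n)
  define W where "W j = tt (Suc n) j * (Rt (real n) (real j) * HH (j - 1) - Bt (real n) (real j))" for j
  define g where "g = gam (real n)"
  have step: "W (Suc k) - W k = (tt (Suc n) k - g * tt n k) * HH k - al (real n) * g * tt n k"
    if k: "1 \<le> k" "k \<le> Suc n" for k
  proof -
    obtain j where j: "k = Suc j" using k(1) by (cases k) auto
    have a: "tt (Suc n) (Suc k) = tt (Suc n) k * sig (real n) (real k)" by (rule L1[OF k(2)])
    have b: "g * tt n k = tt (Suc n) k * gr (real n) (real k)" using L2[OF k(2)] unfolding g_def by (simp add: mult.commute)
    have c: "sig (real n) (real k) * Rt (real n) (real k + 1) - Rt (real n) (real k) = 1 - gr (real n) (real k)"
      by (rule I1) (use kle[OF k(2)] eightk[of k] in auto)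
    have d: "- (sig (real n) (real k) * Bt (real n) (real k + 1)) + Rt (real n) (real k) * hh (real k) + Bt (real n) (real k) = - (al (real n) * gr (real n) (real k))"
      by (rule I2) (use kle[OF k(2)] k(1) in auto)
    have h: "HH (k - 1) = HH k - hh (real k)" unfolding j using HH_step[of j] by simp
    have "W (Suc k) - W k = tt (Suc n) k * ((sig (real n) (real k) * Rt (real n) (real k + 1) - Rt (real n) (real k)) * HH k
       + (- (sig (real n) (real k) * Bt (real n) (real k + 1)) + Rt (real n) (real k) * hh (real k) + Bt (real n) (real k)))"
      unfolding W_def realSuc a h by (simp add: algebra_simps)
    also have "\<dots> = tt (Suc n) k * ((1 - gr (real n) (real k)) * HH k - al (real n) * gr (real n) (real k))"
      by (simp only: c d) simp
    also have "\<dots> = (tt (Suc n) k - g * tt n k) * HH k - al (real n) * g * tt n k"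
      using b by (simp add: algebra_simps)
    finally show ?thesis .
  qed
  have "(\<Sum>k=1..Suc n. (tt (Suc n) k - g * tt n k) * HH k - al (real n) * g * tt n k) = (\<Sum>k=1..Suc n. W (Suc k) - W k)"
    by (rule sum.cong) (auto simp: step)
  also have "\<dots> = W (Suc (Suc n)) - W 1" by (rule sum_Suc_diff) simp
  also have "\<dots> = - (sig (real n) 0 * Bt (real n) 1)"
  proof -
    have "tt (Suc n) 1 = - sig (real n) 0" using L1[of 0 n] by (simp add: tt0)
    then show ?thesis by (simp add: W_def ttz HH0)
  qed
  also have "\<dots> = - (al (real n) * g)" using I3[of "real n"] unfolding g_def by simp
  finally have s: "(\<Sum>k=1..Suc n. (tt (Suc n) k - g * tt n k) * HH k - al (real n) * g * tt n k) = - (al (real n) * g)" .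
  have s2: "(\<Sum>k=1..Suc n. tt n k) = 1 - cc n"
    using WZ[of n] by (simp add: ttz)
  have s3: "(\<Sum>k=1..Suc n. tt n k * HH k) = cc n * G2 n"
    using Suc.IH by (simp add: ttz)
  have "(\<Sum>k=1..Suc n. tt (Suc n) k * HH k) - g * (\<Sum>k=1..Suc n. tt n k * HH k) - al (real n) * g * (\<Sum>k=1..Suc n. tt n k) = - (al (real n) * g)"
    unfolding s[symmetric] sum_distrib_left sum_subtractf[symmetric]
    by (rule sum.cong) (simp_all add: algebra_simps)
  then have "(\<Sum>k=1..Suc n. tt (Suc n) k * HH k) = g * (cc n * G2 n) + al (real n) * g * (1 - cc n) - al (real n) * g"
    unfolding s2 s3 by (simp add: algebra_simps)
  also have "\<dots> = (cc n * g) * (G2 n - al (real n))" by (simp add: algebra_simps)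
  also have "\<dots> = cc (Suc n) * G2 (Suc n)" by (simp add: L3 G2_step g_def)
  finally show ?case .
qed
theorem mainTheorem9:
  fixes n :: nat
  assumes "n \<ge> 1"
  shows "(\<Sum>k=1..n. (8 * of_nat k - 1)
      * (pochhammer (1::complex) k * pochhammer (-1/4) k * pochhammer (-3/4) k
         / ((pochhammer (1/2) k)^2 * pochhammer (3/2) k))
      * (pochhammer (1/2 + of_nat n) k * pochhammer (- of_nat n) k
         / (pochhammer (1/2 + 3 * of_nat n) k * pochhammer (-1 - 3 * of_nat n) k))
      * (\<Sum>i=1..k. 1 / (2 * of_nat i - 1)^2 - 9 / (4 * (of_nat i)^2)))
    = (of_nat (fact n))^2 * pochhammer (1/6) n * pochhammer (5/6) n
      / ((pochhammer (1/2) n)^2 * pochhammer (2/3) n * pochhammer (4/3) n)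
      * (\<Sum>j=1..2*n. (-1)^j / (of_nat j)^2)"
proof -
  have r: "(\<Sum>k=1..n. tt n k * HH k) = cc n * G2 n" by (rule MAINR)
  have "complex_of_real (\<Sum>k=1..n. tt n k * HH k) = complex_of_real (cc n * G2 n)" using r by simp
  then show ?thesis
    by (simp add: tt_def HH_def cc_def G2_def of_real_sum pochhammer_of_real[symmetric])
qed

end
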